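(* For all integers $n\geq 1$ and $p\geq 0$, \begin{align*} \sum_{j=1}^n \binom{p+j}{j}\binom{2(n-j)}{n-j}\frac{4^j}{j}O_{n-j} &= -\binom{2n}{n}H_pO_n + 2^{2n-1}S_n - \sum_{j=0}^{n-1}4^{n-j-1}C_jS_{n-j-1}\\ &\quad + \frac12\sum_{k=1}^p\frac1k\left(4^n\binom{n+k}{n}(H_{n+k}-H_k) - \frac12\sum_{j=1}^n\binom{j+k-1}{j-1}4^j(H_{k+j-1}-H_k)C_{n-j}\right), \end{align*} where $S_m=\sum_{i=1}^m \frac{H_{m-i}}{i}$ for $m\geq1$ and $S_0=0$. In particular, \[ \sum_{j=1}^n\binom{2(n-j)}{n-j}\frac{4^j}{j}O_{n-j} = 2^{2n-1}S_n - \sum_{j=1}^n 4^{j-1}C_{n-j}S_{j-1}. \]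
   Context: $H_n=\sum_{j=1}^n \frac1j$ is the $n$th harmonic number ($H_0=0$), $O_n=\sum_{j=1}^n\frac{1}{2j-1}$ is the $n$th odd harmonic number ($O_0=0$), and $C_n=\frac{1}{n+1}\binom{2n}{n}$ is the $n$th Catalan number. An empty sum (e.g. $\sum_{k=1}^0$) is $0$. *)

theory Defs
  imports Complex_Main
begin

definition H :: "nat \<Rightarrow> real" where
  "H n = (\<Sum>j=1..n. 1 / real j)"

definition OH :: "nat \<Rightarrow> real" where
  "OH n = (\<Sum>j=1..n. 1 / (2 * real j - 1))"

definition Cat :: "nat \<Rightarrow> real" where
  "Cat n = real ((2*n) choose n) / real (n + 1)"

definition S :: "nat \<Rightarrow> real" where
  "S m = (\<Sum>i=1..m. H (m - i) / real i)"

end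

theory Submission imports Defs "HOL-Computational_Algebra.Formal_Power_Series"
begin
unbundle fps_syntax

abbreviation YY :: "real fps" where "YY \<equiv> 1 - fps_const 4 * fps_X"

lemma YY_deriv_nth: "(YY * fps_deriv F) $ n = real (n+1) * F $ (n+1) - 4 * real n * F $ n"
proof -
  have e: "YY * fps_deriv F = fps_deriv F - fps_const 4 * (fps_X * fps_deriv F)"
    by (simp add: algebra_simps)
  show ?thesis
  proof (cases n)
    case 0 then show ?thesis unfolding e by (simp only: fps_sub_nth fps_mult_left_const_nth fps_X_mult_nth fps_deriv_nth) simp
  next
    case (Suc m) then show ?thesis unfolding e by (simp only: fps_sub_nth fps_mult_left_const_nth fps_X_mult_nth fps_deriv_nth) (simp add: algebra_simps)
  qed
qed

lemma ode_unique:
  assumes "YY * fps_deriv F = fps_const c * F + R" "YY * fps_deriv G = fps_const c * G + R"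
    and "F $ 0 = G $ 0"
  shows "F = G"
proof (rule fps_ext)
  fix n
  have rec: "real (Suc k) * F $ (Suc k) - 4 * real k * F $ k = c * F $ k + R $ k"
        "real (Suc k) * G $ (Suc k) - 4 * real k * G $ k = c * G $ k + R $ k" for k
    using arg_cong[OF assms(1), of "\<lambda>f. f $ k"] arg_cong[OF assms(2), of "\<lambda>f. f $ k"]
    by (simp_all only: YY_deriv_nth fps_add_nth fps_mult_left_const_nth Suc_eq_plus1)
  show "F $ n = G $ n"
  proof (induction n)
    case 0 then show ?case using assms(3) by simp
  next
    case (Suc k)
    have "real (Suc k) * F $ Suc k = real (Suc k) * G $ Suc k"
      using rec(1)[of k, unfolded Suc.IH] rec(2)[of k] by linarith
    moreover have "real (Suc k) \<noteq> 0" by (simp del: of_nat_Suc)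
    ultimately show ?case by (metis mult_left_cancel)
  qed
qed

lemma ode_mult:
  assumes "YY * fps_deriv A = fps_const a * A + RA" "YY * fps_deriv B = fps_const b * B + RB"
  shows "YY * fps_deriv (A * B) = fps_const (a+b) * (A * B) + (RA * B + A * RB)"
proof -
  have "YY * fps_deriv (A * B) = A * (YY * fps_deriv B) + (YY * fps_deriv A) * B"
    by (simp only: fps_deriv_mult) algebra
  also have "\<dots> = fps_const (a+b) * (A * B) + (RA * B + A * RB)"
    unfolding assms fps_const_add[symmetric] by algebra
  finally show ?thesis .
qed


lemma ode_const:
  assumes "YY * fps_deriv F = fps_const a * F + R"
  shows "YY * fps_deriv (fps_const k * F) = fps_const a * (fps_const k * F) + fps_const k * R"
proof -
  have "YY * fps_deriv (fps_const k * F) = fps_const k * (YY * fps_deriv F)"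
    by (simp only: fps_deriv_mult_const_left) algebra
  also have "\<dots> = fps_const a * (fps_const k * F) + fps_const k * R" unfolding assms by algebra
  finally show ?thesis .
qed

definition Qf :: "real \<Rightarrow> real fps" where
  "Qf a = Abs_fps (\<lambda>n. 4^n * pochhammer a n / fact n)"

definition Lf :: "real fps" where
  "Lf = Abs_fps (\<lambda>n. if n = 0 then 0 else 4^n / real n)"

definition BO :: "real fps" where
  "BO = Abs_fps (\<lambda>n. real ((2*n) choose n) * OH n)"

definition CatF :: "real fps" where
  "CatF = Abs_fps Cat"

definition HQ :: "real fps" where
  "HQ = Abs_fps (\<lambda>n. 4^n * H n)"

definition Sf :: "real fps" where
  "Sf = Abs_fps (\<lambda>n. 4^n * S n)"

definition Wq :: "nat \<Rightarrow> real fps" where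
  "Wq q = Abs_fps (\<lambda>n. 4^n * real ((n+q) choose n) * (H (n+q) - H q))"

lemma Qf_nth: "Qf a $ n = 4^n * pochhammer a n / fact n"
  by (simp add: Qf_def)

lemma Qf_ode: "YY * fps_deriv (Qf a) = fps_const (4*a) * Qf a + 0"
proof (rule fps_ext)
  fix n
  have f: "fact (Suc n) = real (Suc n) * (fact n :: real)" by simp
  have "real (n+1) * Qf a $ (n+1) = 4^(n+1) * pochhammer a n * (a + real n) / fact n"
    unfolding Qf_nth Suc_eq_plus1[symmetric] f pochhammer_Suc
    by (simp del: of_nat_Suc fact_Suc)
  then show "(YY * fps_deriv (Qf a)) $ n = (fps_const (4*a) * Qf a + 0) $ n"
    unfolding YY_deriv_nth
    by (simp add: Qf_nth fps_mult_left_const_nth field_simps)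
qed

lemma Qf_0: "Qf a $ 0 = 1" by (simp add: Qf_nth)

lemma Qf_mult: "Qf a * Qf b = Qf (a + b)"
proof (rule ode_unique)
  show "YY * fps_deriv (Qf a * Qf b) = fps_const (4*a+4*b) * (Qf a * Qf b) + (0 * Qf b + Qf a * 0)"
    using ode_mult[OF Qf_ode Qf_ode] .
  have e: "4*(a+b) = 4*a+4*b" by simp
  show "YY * fps_deriv (Qf (a+b)) = fps_const (4*a+4*b) * Qf (a+b) + (0 * Qf b + Qf a * 0)"
    using Qf_ode[of "a+b"] unfolding e by (simp only: mult_zero_left mult_zero_right add_0_right)
  show "(Qf a * Qf b) $ 0 = Qf (a+b) $ 0" by (simp add: Qf_0)
qed

lemma Lf_ode: "YY * fps_deriv Lf = fps_const 0 * Lf + fps_const 4"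
proof (rule fps_ext)
  fix n
  show "(YY * fps_deriv Lf) $ n = (fps_const 0 * Lf + fps_const 4) $ n"
    unfolding YY_deriv_nth
    by (cases n) (simp_all add: Lf_def del: of_nat_Suc)
qed

lemma central_Q: "real ((2*n) choose n) = Qf (1/2) $ n"
proof -
  have "real ((2*n) choose n) = fact (2*n) / (fact n * fact n)"
    by (simp add: binomial_fact mult_2)
  also have "\<dots> = 4^n * pochhammer (1/2) n / fact n"
    unfolding fact_double by (simp add: power_mult)
  finally show ?thesis by (simp add: Qf_nth)
qed


lemma Qf_rec: "real (Suc n) * Qf a $ (Suc n) = 4 * (a + real n) * Qf a $ n"
proof -
  have "(YY * fps_deriv (Qf a)) $ n = (fps_const (4*a) * Qf a + 0) $ n" by (simp only: Qf_ode)
  then show ?thesis unfolding YY_deriv_nth by (simp add: algebra_simps)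
qed

lemma H_Suc: "H (Suc n) = H n + 1 / real (Suc n)"
  by (simp add: H_def)

lemma OH_Suc: "OH (Suc n) = OH n + 1 / (2 * real n + 1)"
  by (simp add: OH_def)

lemma H_0: "H 0 = 0" by (simp add: H_def)
lemma OH_0: "OH 0 = 0" by (simp add: OH_def)

lemma BO_eq: "BO = fps_const (1/2) * (Qf (1/2) * Lf)"
proof (rule ode_unique)
  show "YY * fps_deriv (fps_const (1/2) * (Qf (1/2) * Lf)) =
    fps_const (4*(1/2)+0) * (fps_const (1/2) * (Qf (1/2) * Lf)) + fps_const (1/2) * (0 * Lf + Qf (1/2) * fps_const 4)"
    using ode_const[OF ode_mult[OF Qf_ode Lf_ode]] .
  show "YY * fps_deriv BO =
    fps_const (4*(1/2)+0) * BO + fps_const (1/2) * (0 * Lf + Qf (1/2) * fps_const 4)"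
  proof (rule fps_ext)
    fix n
    have r: "real (Suc n) * Qf (1/2) $ (Suc n) = 4 * (1/2 + real n) * Qf (1/2) $ n" by (rule Qf_rec)
    show "(YY * fps_deriv BO) $ n = (fps_const (4*(1/2)+0) * BO + fps_const (1/2) * (0 * Lf + Qf (1/2) * fps_const 4)) $ n"
      unfolding YY_deriv_nth
      apply (simp add: BO_def central_Q fps_mult_left_const_nth OH_Suc del: of_nat_Suc)
      apply (simp only: mult.assoc[symmetric] r)
      apply (simp add: field_simps)
      done
  qed
  show "BO $ 0 = (fps_const (1/2) * (Qf (1/2) * Lf)) $ 0" by (simp add: BO_def OH_0 Lf_def)
qed


lemma Cat_Q: "Cat m = Qf (1/2) $ m / real (Suc m)"
  by (simp add: Cat_def central_Q)

lemma CatF_eq: "fps_X * CatF = fps_const (1/2) * (1 - Qf (-1/2))"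
proof (rule fps_ext)
  fix n
  show "(fps_X * CatF) $ n = (fps_const (1/2) * (1 - Qf (-1/2))) $ n"
  proof (cases n)
    case 0 then show ?thesis by (simp add: Qf_0)
  next
    case (Suc m)
    have f: "fact (Suc m) = real (Suc m) * (fact m :: real)" by simp
    have "Qf (-1/2) $ Suc m = 4^(Suc m) * ((-1/2) * pochhammer (1/2) m) / (real (Suc m) * fact m)"
      unfolding Qf_nth pochhammer_rec f by simp
    then show ?thesis using Suc by (simp add: CatF_def Cat_Q Qf_nth field_simps del: of_nat_Suc)
  qed
qed

lemma Qf1_nth: "Qf 1 $ n = 4^n"
  by (simp add: Qf_nth pochhammer_fact[symmetric])

lemma HQ_eq: "HQ = Qf 1 * Lf"
proof (rule ode_unique)
  show "YY * fps_deriv (Qf 1 * Lf) = fps_const (4*1+0) * (Qf 1 * Lf) + (0 * Lf + Qf 1 * fps_const 4)"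
    using ode_mult[OF Qf_ode Lf_ode] .
  show "YY * fps_deriv HQ = fps_const (4*1+0) * HQ + (0 * Lf + Qf 1 * fps_const 4)"
  proof (rule fps_ext)
    fix n
    show "(YY * fps_deriv HQ) $ n = (fps_const (4*1+0) * HQ + (0 * Lf + Qf 1 * fps_const 4)) $ n"
      unfolding YY_deriv_nth
      by (simp add: HQ_def H_Suc Qf1_nth fps_mult_left_const_nth field_simps)
  qed
  show "HQ $ 0 = (Qf 1 * Lf) $ 0" by (simp add: HQ_def H_0 Lf_def)
qed

lemma Sf_eq: "Sf = Lf * HQ"
proof (rule fps_ext)
  fix n
  have "(Lf * HQ) $ n = (\<Sum>i=0..n. Lf $ i * HQ $ (n - i))" by (rule fps_mult_nth)
  also have "\<dots> = (\<Sum>i=1..n. Lf $ i * HQ $ (n - i))"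
    by (rule sum.mono_neutral_right) (auto simp: Lf_def)
  also have "\<dots> = (\<Sum>i=1..n. 4^n * (H (n - i) / real i))"
  proof (rule sum.cong)
    fix i assume "i \<in> {1..n}"
    then have "(4::real)^i * 4^(n-i) = 4^n" by (simp add: power_add[symmetric])
    then show "Lf $ i * HQ $ (n - i) = 4^n * (H (n - i) / real i)"
      using \<open>i \<in> {1..n}\<close> by (simp add: Lf_def HQ_def field_simps)
  qed simp
  also have "\<dots> = Sf $ n" by (simp add: Sf_def S_def sum_distrib_left)
  finally show "Sf $ n = (Lf * HQ) $ n" by simp
qed

lemma Qf_nat: "Qf (real q) $ j = 4^j * real ((q + j - 1) choose j)" if "q \<ge> 1"
proof -
  have "real ((q + j - 1) choose j) = real (q + j - 1) gchoose j" by (rule binomial_gbinomial)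
  also have "\<dots> = pochhammer (real q) j / fact j"
    unfolding gbinomial_pochhammer' using that by (simp add: of_nat_diff)
  finally show ?thesis by (simp add: Qf_nth)
qed

lemma Qf_nat1: "Qf (real q + 1) $ j = 4^j * real ((j + q) choose j)"
  using Qf_nat[of "Suc q" j] by (simp add: add.commute)

lemma Qf_nat1': "Qf (1 + real q) $ j = 4^j * real ((j + q) choose j)"
  using Qf_nat1[of q j] by (simp add: add.commute)

lemma Wq_eq: "Wq q = Qf (real q + 1) * Lf"
proof (rule ode_unique)
  show "YY * fps_deriv (Qf (real q + 1) * Lf) = fps_const (4*(real q + 1)+0) * (Qf (real q + 1) * Lf) + (0 * Lf + Qf (real q + 1) * fps_const 4)"
    using ode_mult[OF Qf_ode Lf_ode] .
  show "YY * fps_deriv (Wq q) = fps_const (4*(real q + 1)+0) * Wq q + (0 * Lf + Qf (real q + 1) * fps_const 4)"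
  proof (rule fps_ext)
    fix n
    have b: "real (Suc n) * real (Suc n + q choose Suc n) = real (Suc (n+q)) * real (n + q choose n)"
      using Suc_times_binomial[of n "n+q"] by (simp only: of_nat_mult[symmetric] add_Suc)
    have h: "H (Suc n + q) = H (n + q) + 1 / real (Suc (n+q))" using H_Suc[of "n+q"] by simp
    have "real (n+1) * Wq q $ (n+1) = 4^(n+1) * (real (Suc (n+q)) * real (n + q choose n)) * (H (n+q) - H q + 1 / real (Suc (n+q)))"
      unfolding Wq_def fps_nth_Abs_fps Suc_eq_plus1[symmetric] b[symmetric] h
      by (simp del: of_nat_Suc)
    also have "\<dots> = 4^(n+1) * real (n + q choose n) * (real (Suc (n+q)) * (H (n+q) - H q) + 1)"
      by (simp add: field_simps del: of_nat_Suc)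
    finally have e: "real (n+1) * Wq q $ (n+1) = 4^(n+1) * real (n + q choose n) * (real (Suc (n+q)) * (H (n+q) - H q) + 1)" .
    show "(YY * fps_deriv (Wq q)) $ n = (fps_const (4*(real q + 1)+0) * Wq q + (0 * Lf + Qf (real q + 1) * fps_const 4)) $ n"
      unfolding YY_deriv_nth e
      by (simp add: Wq_def Qf_nat1 Qf_nat1' fps_mult_left_const_nth field_simps)
  qed
  show "Wq q $ 0 = (Qf (real q + 1) * Lf) $ 0" by (simp add: Wq_def Lf_def)
qed


lemma A_fps: "Lf * BO = fps_const (1/2) * Sf - fps_X * (CatF * Sf)"
proof -
  have q: "Qf (-1/2) * Qf 1 = Qf (1/2)" by (simp add: Qf_mult)
  show ?thesis using CatF_eq q BO_eq Sf_eq HQ_eq by algebra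
qed

lemma B_fps:
  assumes "q \<ge> 1"
  shows "Qf (real q) * BO = fps_const (1/2) * Wq q - fps_const (1/4) * ((fps_const 4 * (fps_X * Wq q)) * CatF)"
proof -
  have q1: "Qf (real q) * Qf (1/2) = Qf (real q + 1/2)" by (simp add: Qf_mult)
  have q2: "Qf (real q + 1) * Qf (-1/2) = Qf (real q + 1/2)" unfolding Qf_mult by (rule arg_cong[where f=Qf]) simp
  have c: "fps_const (1/4) * fps_const 4 = (1 :: real fps)" by (simp add: fps_const_mult[symmetric])
  show ?thesis using CatF_eq q1 q2 c BO_eq Wq_eq[of q] by algebra
qed


lemma A_real:
  assumes "n \<ge> 1"
  shows "(\<Sum>j=1..n. real ((2*(n-j)) choose (n-j)) * 4^j / real j * OH (n-j))
     = 2^(2*n-1) * S n - (\<Sum>j=0..n-1. 4^(n-j-1) * Cat j * S (n-j-1))"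
proof -
  have "(Lf * BO) $ n = (fps_const (1/2) * Sf - fps_X * (CatF * Sf)) $ n" by (simp only: A_fps)
  moreover have "(Lf * BO) $ n = (\<Sum>j=1..n. real ((2*(n-j)) choose (n-j)) * 4^j / real j * OH (n-j))"
  proof -
    have "(Lf * BO) $ n = (\<Sum>i=0..n. Lf $ i * BO $ (n - i))" by (rule fps_mult_nth)
    also have "\<dots> = (\<Sum>i=1..n. Lf $ i * BO $ (n - i))"
      by (rule sum.mono_neutral_right) (auto simp: Lf_def)
    also have "\<dots> = (\<Sum>j=1..n. real ((2*(n-j)) choose (n-j)) * 4^j / real j * OH (n-j))"
      by (rule sum.cong) (auto simp: Lf_def BO_def)
    finally show ?thesis .
  qed
  moreover have "(fps_const (1/2) * Sf - fps_X * (CatF * Sf)) $ n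
      = 2^(2*n-1) * S n - (\<Sum>j=0..n-1. 4^(n-j-1) * Cat j * S (n-j-1))"
  proof -
    have p: "(2::real)^(2*n-1) = 1/2 * 4^n"
    proof -
      have "(2::real)^(2*n) = 2 * 2^(2*n-1)" using assms
        by (metis Suc_diff_1 less_le_trans mult_pos_pos pos2 power_Suc zero_less_one)
      then show ?thesis by (simp add: power_mult)
    qed
    have "(CatF * Sf) $ (n-1) = (\<Sum>j=0..n-1. 4^(n-j-1) * Cat j * S (n-j-1))"
      unfolding fps_mult_nth by (rule sum.cong) (auto simp: CatF_def Sf_def)
    moreover have "(fps_X * (CatF * Sf)) $ n = (CatF * Sf) $ (n-1)" using assms by simp
    moreover have "(fps_const (1/2) * Sf) $ n = 2^(2*n-1) * S n" unfolding p by (simp add: Sf_def)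
    ultimately show ?thesis by simp
  qed
  ultimately show ?thesis by simp
qed

lemma B_real:
  assumes "q \<ge> 1"
  shows "(\<Sum>j=1..n. real ((q+j-1) choose j) * real ((2*(n-j)) choose (n-j)) * 4^j * OH (n-j))
    = - real ((2*n) choose n) * OH n + 1/2 * (4^n * real ((n+q) choose n) * (H (n+q) - H q)
       - 1/2 * (\<Sum>j=1..n. real ((j+q-1) choose (j-1)) * 4^j * (H (q+j-1) - H q) * Cat (n-j)))"
proof -
  have e: "(Qf (real q) * BO) $ n = (fps_const (1/2) * Wq q - fps_const (1/4) * ((fps_const 4 * (fps_X * Wq q)) * CatF)) $ n"
    by (simp only: B_fps[OF assms])
  have l: "(Qf (real q) * BO) $ n = real ((2*n) choose n) * OH n + (\<Sum>j=1..n. real ((q+j-1) choose j) * real ((2*(n-j)) choose (n-j)) * 4^j * OH (n-j))"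
  proof -
    have "(Qf (real q) * BO) $ n = (\<Sum>i=0..n. Qf (real q) $ i * BO $ (n - i))" by (rule fps_mult_nth)
    also have "\<dots> = Qf (real q) $ 0 * BO $ n + (\<Sum>i=Suc 0..n. Qf (real q) $ i * BO $ (n - i))"
      by (subst sum.atLeast_Suc_atMost) auto
    also have "(\<Sum>i=Suc 0..n. Qf (real q) $ i * BO $ (n - i)) = (\<Sum>j=1..n. real ((q+j-1) choose j) * real ((2*(n-j)) choose (n-j)) * 4^j * OH (n-j))"
      by (rule sum.cong) (auto simp: Qf_nat[OF assms] BO_def)
    finally show ?thesis by (simp add: Qf_0 BO_def)
  qed
  have r: "(fps_const (1/2) * Wq q - fps_const (1/4) * ((fps_const 4 * (fps_X * Wq q)) * CatF)) $ n
     = 1/2 * (4^n * real ((n+q) choose n) * (H (n+q) - H q))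
       - 1/4 * (\<Sum>j=1..n. real ((j+q-1) choose (j-1)) * 4^j * (H (q+j-1) - H q) * Cat (n-j))"
  proof -
    have "((fps_const 4 * (fps_X * Wq q)) * CatF) $ n = (\<Sum>i=0..n. (fps_const 4 * (fps_X * Wq q)) $ i * CatF $ (n - i))"
      by (rule fps_mult_nth)
    also have "\<dots> = (\<Sum>i=1..n. (fps_const 4 * (fps_X * Wq q)) $ i * CatF $ (n - i))"
      by (rule sum.mono_neutral_right) auto
    also have "\<dots> = (\<Sum>j=1..n. real ((j+q-1) choose (j-1)) * 4^j * (H (q+j-1) - H q) * Cat (n-j))"
    proof (rule sum.cong)
      fix j assume "j \<in> {1..n}"
      then obtain i where j: "j = Suc i" by (cases j) auto
      show "(fps_const 4 * (fps_X * Wq q)) $ j * CatF $ (n - j) = real ((j+q-1) choose (j-1)) * 4^j * (H (q+j-1) - H q) * Cat (n-j)"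
        unfolding j by (simp add: Wq_def CatF_def add.commute)
    qed simp
    finally show ?thesis by (simp add: Wq_def)
  qed
  show ?thesis using e l r by (simp add: right_diff_distrib)
qed


lemma step_alg:
  fixes Lp Lq T Z b Oo Hp Hq A1 A2 Sp c :: real
  assumes "Lq = Lp + c * T" "Lp = - b * Hp * Oo + A1 - A2 + 1/2 * Sp" "T = - b * Oo + 1/2 * Z" "Hq = Hp + c"
  shows "Lq = - b * Hq * Oo + A1 - A2 + 1/2 * (Sp + c * Z)"
  using assms by (simp add: algebra_simps)

lemma L_step:
  fixes n p :: nat
  shows "(\<Sum>j=1..n. real ((Suc p + j) choose j) * real ((2*(n-j)) choose (n-j)) * 4^j / real j * OH (n-j))
    = (\<Sum>j=1..n. real ((p + j) choose j) * real ((2*(n-j)) choose (n-j)) * 4^j / real j * OH (n-j))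
      + 1 / real (Suc p) * (\<Sum>j=1..n. real ((Suc p+j-1) choose j) * real ((2*(n-j)) choose (n-j)) * 4^j * OH (n-j))"
proof -
  have "real ((Suc p + j) choose j) * real ((2*(n-j)) choose (n-j)) * 4^j / real j * OH (n-j)
     = real ((p + j) choose j) * real ((2*(n-j)) choose (n-j)) * 4^j / real j * OH (n-j)
       + 1 / real (Suc p) * (real ((Suc p+j-1) choose j) * real ((2*(n-j)) choose (n-j)) * 4^j * OH (n-j))"
    if "j \<in> {1..n}" for j
  proof -
    from that obtain i where j: "j = Suc i" by (cases j) auto
    have b1: "(Suc p + j) choose j = ((p + j) choose i) + ((p + j) choose j)"
      unfolding j by simp
    have b2: "real (Suc i) * real ((p + j) choose j) = real (Suc p) * real ((p + j) choose i)"
      using Suc_times_binomial_add[of i p] unfolding j by (simp only: of_nat_mult[symmetric] add_Suc_right add_Suc add.commute)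
    have b2': "real ((p + j) choose i) / real j = real ((p + j) choose j) / real (Suc p)"
      using b2 unfolding j by (simp add: field_simps del: of_nat_Suc)
    have "real ((Suc p + j) choose j) / real j = real ((p + j) choose j) / real j + real ((p + j) choose j) / real (Suc p)"
      unfolding b1 of_nat_add add_divide_distrib b2' by simp
    then have "real ((Suc p + j) choose j) * (real ((2*(n-j)) choose (n-j)) * 4^j * OH (n-j)) / real j
        = (real ((p + j) choose j) / real j + real ((p + j) choose j) / real (Suc p)) * (real ((2*(n-j)) choose (n-j)) * 4^j * OH (n-j))"
      by (metis times_divide_eq_left mult.commute)
    then show ?thesis by (simp add: field_simps)
  qed
  then show ?thesis by (simp add: sum.distrib sum_distrib_left)
qed

theorem theorem7:
  fixes n p :: nat
  assumes "n \<ge> 1"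
  shows "(\<Sum>j=1..n. real ((p + j) choose j) * real ((2*(n-j)) choose (n-j)) * 4^j / real j * OH (n-j))
     = - real ((2*n) choose n) * H p * OH n + 2^(2*n-1) * S n
       - (\<Sum>j=0..n-1. 4^(n-j-1) * Cat j * S (n-j-1))
       + 1/2 * (\<Sum>k=1..p. 1 / real k *
           (4^n * real ((n+k) choose n) * (H (n+k) - H k)
            - 1/2 * (\<Sum>j=1..n. real ((j+k-1) choose (j-1)) * 4^j * (H (k+j-1) - H k) * Cat (n-j))))
   \<and> (\<Sum>j=1..n. real ((2*(n-j)) choose (n-j)) * 4^j / real j * OH (n-j))
     = 2^(2*n-1) * S n - (\<Sum>j=1..n. 4^(j-1) * Cat (n-j) * S (j-1))"
proof
  have A: "(\<Sum>j=1..n. real ((2*(n-j)) choose (n-j)) * 4^j / real j * OH (n-j))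
     = 2^(2*n-1) * S n - (\<Sum>j=0..n-1. 4^(n-j-1) * Cat j * S (n-j-1))"
    by (rule A_real[OF assms])
  have re: "(\<Sum>j=0..n-1. 4^(n-j-1) * Cat j * S (n-j-1)) = (\<Sum>j=1..n. 4^(j-1) * Cat (n-j) * S (j-1))"
    using assms
    by (intro sum.reindex_bij_witness[where i="\<lambda>j. n - j" and j="\<lambda>j. n - j"]) auto
  show "(\<Sum>j=1..n. real ((2*(n-j)) choose (n-j)) * 4^j / real j * OH (n-j))
     = 2^(2*n-1) * S n - (\<Sum>j=1..n. 4^(j-1) * Cat (n-j) * S (j-1))"
    using A re by simp
  show "(\<Sum>j=1..n. real ((p + j) choose j) * real ((2*(n-j)) choose (n-j)) * 4^j / real j * OH (n-j))
     = - real ((2*n) choose n) * H p * OH n + 2^(2*n-1) * S n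
       - (\<Sum>j=0..n-1. 4^(n-j-1) * Cat j * S (n-j-1))
       + 1/2 * (\<Sum>k=1..p. 1 / real k *
           (4^n * real ((n+k) choose n) * (H (n+k) - H k)
            - 1/2 * (\<Sum>j=1..n. real ((j+k-1) choose (j-1)) * 4^j * (H (k+j-1) - H k) * Cat (n-j))))"
  proof (induction p)
    case 0
    then show ?case using A by (simp add: H_0)
  next
    case (Suc p)
    have B: "(\<Sum>j=1..n. real ((Suc p+j-1) choose j) * real ((2*(n-j)) choose (n-j)) * 4^j * OH (n-j))
    = - real ((2*n) choose n) * OH n + 1/2 * (4^n * real ((n+Suc p) choose n) * (H (n+Suc p) - H (Suc p))
       - 1/2 * (\<Sum>j=1..n. real ((j+Suc p-1) choose (j-1)) * 4^j * (H (Suc p+j-1) - H (Suc p)) * Cat (n-j)))"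
      by (rule B_real) simp
    have sp: "\<And>g::nat\<Rightarrow>real. (\<Sum>k=1..Suc p. g k) = (\<Sum>k=1..p. g k) + g (Suc p)" by simp
    show ?case unfolding sp by (rule step_alg[OF L_step Suc.IH B H_Suc[of p]])
  qed
qed

end
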